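(* Let $S$ be a Stone relation algebra satisfying the point axiom, i.e., the set $\mathrm{IP}(S)$ of ideal-points of $S$ is finite and non-empty and $\top=\bigsqcup\mathrm{IP}(S)$. Let $x\in S$. Then: 1. $1=\bigsqcup\{pp^{\smile}\mid p\in\mathrm{IP}(S)\}$. 2. $x=\bigsqcup\{pp^{\smile}xqq^{\smile}\mid p,q\in\mathrm{IP}(S)\}$. 3. For each atom $a\in S$ there is $p\in\mathrm{IP}(S)$ with $a\sqsubseteq p$. 4. Every point of $S$ is an ideal-point.
   Context: A Stone relation algebra is a structure $(S,\sqcup,\sqcap,\cdot,\overline{\,\cdot\,},{}^{\smile},\bot,\top,1)$ (write $xy$ for $x\cdot y$, $\overline{x}$ for the pseudocomplement, $x^{\smile}$ for the converse) such that: $(S,\sqcup,\sqcap,\bot,\top)$ is a bounded distributive lattice with order $x\sqsubseteq y\iff x\sqcup y=y$; $x\sqcap y=\bot\iff x\sqsubseteq\overline{y}$; $\overline{x}\sqcup\overline{\overline{x}}=\top$; $\cdot$ is associative with two-sided unit $1$, distributes over $\sqcup$ on both sides, and $\bot$ is a zero of $\cdot$; $x^{\smile\smile}=x$, $(xy)^{\smile}=y^{\smile}x^{\smile}$, $(x\sqcup y)^{\smile}=x^{\smile}\sqcup y^{\smile}$; $\overline{\overline{1}}=1$; $\overline{\overline{xy}}=\overline{\overline{x}}\,\overline{\overline{y}}$; $xy\sqcap z\sqsubseteq x(y\sqcap x^{\smile}z)$. $\bigsqcup P$ is the join of a finite non-empty set $P$. $x$ is injective if $xx^{\smile}\sqsubseteq1$,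 surjective if $1\sqsubseteq x^{\smile}x$, a vector if $x\top=x$, a covector if $\top x=x$, an ideal if it is a vector and a covector, and a point if it is an injective surjective vector. An ideal-point is a point $p$ such that for all points $q$ and all ideals $x\neq\bot$, $qx\sqsubseteq p$ implies $q\sqsubseteq p$. An atom is an element $x\neq\bot$ such that $\bot\neq y\sqsubseteq x$ implies $y=x$. *)

theory Defs
  imports Main
begin

text \<open>Stone relation algebras. The lattice operations are sup/inf/bot/top with order \<le>;
  composition is (*) with unit 1; cnv is the converse, pcomp the pseudocomplement.\<close>

class stone_relation_algebra = bounded_lattice + distrib_lattice + monoid_mult +
  fixes cnv :: "'a \<Rightarrow> 'a"
    and pcomp :: "'a \<Rightarrow> 'a"
  assumes pseudo_complement: "inf x y = bot \<longleftrightarrow> x \<le> pcomp y"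
    and stone: "sup (pcomp x) (pcomp (pcomp x)) = top"
    and mult_sup_distr_right: "(sup x y) * z = sup (x * z) (y * z)"
    and mult_sup_distr_left: "z * (sup x y) = sup (z * x) (z * y)"
    and mult_bot_left: "bot * x = bot"
    and mult_bot_right: "x * bot = bot"
    and cnv_involutive: "cnv (cnv x) = x"
    and cnv_mult: "cnv (x * y) = cnv y * cnv x"
    and cnv_sup: "cnv (sup x y) = sup (cnv x) (cnv y)"
    and pp_one: "pcomp (pcomp 1) = 1"
    and pp_mult: "pcomp (pcomp (x * y)) = pcomp (pcomp x) * pcomp (pcomp y)"
    and dedekind_1: "inf (x * y) z \<le> x * inf y (cnv x * z)"
begin

definition injective :: "'a \<Rightarrow> bool" where "injective x \<longleftrightarrow> x * cnv x \<le> 1"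
definition surjective :: "'a \<Rightarrow> bool" where "surjective x \<longleftrightarrow> 1 \<le> cnv x * x"
definition vector :: "'a \<Rightarrow> bool" where "vector x \<longleftrightarrow> x * top = x"
definition covector :: "'a \<Rightarrow> bool" where "covector x \<longleftrightarrow> top * x = x"
definition ideal :: "'a \<Rightarrow> bool" where "ideal x \<longleftrightarrow> vector x \<and> covector x"
definition point :: "'a \<Rightarrow> bool" where
  "point x \<longleftrightarrow> injective x \<and> surjective x \<and> vector x"
definition ideal_point :: "'a \<Rightarrow> bool" where
  "ideal_point p \<longleftrightarrow> point p \<and>
     (\<forall>q x. point q \<and> ideal x \<and> x \<noteq> bot \<and> q * x \<le> p \<longrightarrow> q \<le> p)"
definition atom :: "'a \<Rightarrow> bool" where
  "atom x \<longleftrightarrow> x \<noteq> bot \<and> (\<forall>y. y \<noteq> bot \<and> y \<le> x \<longrightarrow> y = x)"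

end

end

theory Submission
  imports Defs
begin

context stone_relation_algebra
begin

lemma mult_mono_l: "x \<le> y \<Longrightarrow> z * x \<le> z * y"
  by (metis le_iff_sup mult_sup_distr_left)

lemma mult_mono_r: "x \<le> y \<Longrightarrow> x * z \<le> y * z"
  by (metis le_iff_sup mult_sup_distr_right)

lemma cnv_mono: "x \<le> y \<Longrightarrow> cnv x \<le> cnv y"
  by (metis le_iff_sup cnv_sup)

lemma cnv_top: "cnv top = top"
  by (metis cnv_involutive cnv_mono order.antisym top_greatest)

lemma sup_fin_mult_right:
  "finite A \<Longrightarrow> A \<noteq> {} \<Longrightarrow> Sup_fin A * y = Sup_fin ((\<lambda>a. a * y) ` A)"
  by (rule Sup_fin.hom_commute[where h="\<lambda>a. a * y"], rule mult_sup_distr_right)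

lemma sup_fin_mult_left:
  "finite A \<Longrightarrow> A \<noteq> {} \<Longrightarrow> y * Sup_fin A = Sup_fin ((\<lambda>a. y * a) ` A)"
  by (rule Sup_fin.hom_commute[where h="\<lambda>a. y * a"], rule mult_sup_distr_left)

lemma one_inf_vector: "vector p \<Longrightarrow> inf 1 p \<le> p * cnv p"
proof -
  assume v: "vector p"
  have "inf 1 p = inf (p * top) 1" using v by (simp add: vector_def inf_commute)
  also have "\<dots> \<le> p * inf top (cnv p * 1)" by (rule dedekind_1)
  finally show ?thesis by simp
qed

lemma lemA:
  assumes ip: "ideal_point p" and q: "point q" and ne: "inf q p \<noteq> bot"
  shows "q \<le> p"
proof -
  have pp: "point p" using ip ideal_point_def by blast
  have pv: "p * top = p" using pp point_def vector_def by blast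
  have qv: "q * top = q" using q point_def vector_def by blast
  have qi: "q * cnv q \<le> 1" using q point_def injective_def by blast
  define x where "x = cnv q * p"
  have "x * top = x" unfolding x_def using pv by (simp add: mult.assoc)
  moreover have "top * x = x"
  proof -
    have "top * cnv q = cnv q" using qv cnv_mult[of q top] cnv_top by simp
    then show ?thesis unfolding x_def by (simp add: mult.assoc[symmetric])
  qed
  ultimately have ix: "ideal x" by (simp add: ideal_def vector_def covector_def)
  have xnb: "x \<noteq> bot"
  proof
    assume xb: "x = bot"
    have "inf q p = inf (q * top) p" using qv by simp
    also have "\<dots> \<le> q * inf top (cnv q * p)" by (rule dedekind_1)
    also have "\<dots> = bot" using xb x_def mult_bot_right by simp
    finally show False using ne bot_unique by blast
  qed
  have "q * x \<le> p"
  proof -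
    have "q * x = (q * cnv q) * p" unfolding x_def by (simp add: mult.assoc)
    also have "\<dots> \<le> 1 * p" using qi by (rule mult_mono_r)
    finally show ?thesis by simp
  qed
  then show ?thesis using ip q ix xnb unfolding ideal_point_def by blast
qed

lemma lemB:
  assumes p: "point p" and q: "point q" and le: "q \<le> p"
  shows "p \<le> q"
proof -
  have qs: "1 \<le> cnv q * q" using q point_def surjective_def by blast
  have pi: "p * cnv p \<le> 1" using p point_def injective_def by blast
  have "p = p * 1" by simp
  also have "\<dots> \<le> p * (cnv q * q)" using qs by (rule mult_mono_l)
  also have "\<dots> = (p * cnv q) * q" by (simp add: mult.assoc)
  also have "\<dots> \<le> (p * cnv p) * q" using cnv_mono[OF le] by (intro mult_mono_r mult_mono_l)
  also have "\<dots> \<le> 1 * q" using pi by (rule mult_mono_r)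
  finally show ?thesis by simp
qed

end

theorem mainTheorem12:
  fixes x :: "'a::stone_relation_algebra"
  assumes "finite {p::'a. ideal_point p}"
    and "{p::'a. ideal_point p} \<noteq> {}"
    and "top = Sup_fin {p::'a. ideal_point p}"
  shows "1 = Sup_fin {p * cnv p | p::'a. ideal_point p}
    \<and> x = Sup_fin {p * cnv p * x * q * cnv q | p q. ideal_point p \<and> ideal_point q}
    \<and> (\<forall>a::'a. atom a \<longrightarrow> (\<exists>p. ideal_point p \<and> a \<le> p))
    \<and> (\<forall>p::'a. point p \<longrightarrow> ideal_point p)"
proof -
  define IP where "IP = {p::'a. ideal_point p}"
  have fin: "finite IP" and ne: "IP \<noteq> {}" and top: "top = Sup_fin IP"
    using assms IP_def by auto
  define P where "P = {p * cnv p | p::'a. ideal_point p}"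
  have PI: "P = (\<lambda>p. p * cnv p) ` IP" unfolding P_def IP_def by auto
  have finP: "finite P" and neP: "P \<noteq> {}" using PI fin ne by auto
  have meet: "inf y top = Sup_fin {inf y a |a. a \<in> IP}" for y :: 'a
    using top inf_Sup1_distrib[OF fin ne, of y] by simp
  have finM: "finite {inf y a |a. a \<in> IP}" for y :: 'a
    using fin by simp
  have neM: "{inf y a |a. a \<in> IP} \<noteq> {}" for y :: 'a
    using ne by auto
  have nonbot: "\<exists>p\<in>IP. inf y p \<noteq> bot" if "y \<noteq> bot" for y :: 'a
  proof (rule ccontr)
    assume "\<not> ?thesis"
    then have "\<forall>a\<in>{inf y a |a. a \<in> IP}. a \<le> bot" by auto
    then have "Sup_fin {inf y a |a. a \<in> IP} \<le> bot"
      using Sup_fin.bounded_iff[OF finM neM] by blast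
    then show False using meet[of y] that by (simp add: bot_unique)
  qed
  have ipp: "ideal_point p \<Longrightarrow> point p" for p :: 'a by (simp add: ideal_point_def)
  have P1: "1 = Sup_fin P"
  proof (rule order.antisym)
    have "(1::'a) = inf 1 top" by simp
    also have "\<dots> = Sup_fin {inf 1 a |a. a \<in> IP}" by (rule meet)
    also have "\<dots> \<le> Sup_fin P"
    proof -
      have "\<forall>b\<in>{inf 1 a |a. a \<in> IP}. b \<le> Sup_fin P"
      proof
        fix b assume "b \<in> {inf 1 a |a. a \<in> IP}"
        then obtain a where a: "a \<in> IP" "b = inf 1 a" by auto
        have "vector a" using a ipp IP_def point_def by auto
        then have "b \<le> a * cnv a" using a one_inf_vector by simp
        also have "\<dots> \<le> Sup_fin P" using a PI finP by (intro Sup_fin.coboundedI) auto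
        finally show "b \<le> Sup_fin P" .
      qed
      then show ?thesis using Sup_fin.bounded_iff[OF finM neM] by blast
    qed
    finally show "1 \<le> Sup_fin P" .
  next
    show "Sup_fin P \<le> 1"
      using Sup_fin.bounded_iff[OF finP neP] PI IP_def ipp point_def injective_def by auto
  qed
  define R where "R = {p * cnv p * x * q * cnv q | p q. ideal_point p \<and> ideal_point q}"
  have RI: "R = (\<lambda>(p,q). p * cnv p * x * q * cnv q) ` (IP \<times> IP)"
    unfolding R_def IP_def by auto
  have finR: "finite R" and neR: "R \<noteq> {}" using RI fin ne by auto
  have P2: "x = Sup_fin R"
  proof (rule order.antisym)
    have "x = Sup_fin P * x * Sup_fin P" using P1 by simp
    also have "\<dots> = Sup_fin ((\<lambda>a. a * x * Sup_fin P) ` P)"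
      using sup_fin_mult_right[OF finP neP, of "x * Sup_fin P"] by (simp add: mult.assoc)
    also have "\<dots> \<le> Sup_fin R"
    proof -
      have "\<forall>c\<in>(\<lambda>a. a * x * Sup_fin P) ` P. c \<le> Sup_fin R"
      proof
        fix c assume "c \<in> (\<lambda>a. a * x * Sup_fin P) ` P"
        then obtain p where p: "p \<in> IP" "c = p * cnv p * x * Sup_fin P" using PI by auto
        have "c = Sup_fin ((\<lambda>b. p * cnv p * x * b) ` P)"
          using p sup_fin_mult_left[OF finP neP] by simp
        also have "\<dots> \<le> Sup_fin R"
        proof -
          have "\<forall>d\<in>(\<lambda>b. p * cnv p * x * b) ` P. d \<le> Sup_fin R"
          proof
            fix d assume "d \<in> (\<lambda>b. p * cnv p * x * b) ` P"
            then obtain q where q: "q \<in> IP" "d = p * cnv p * x * (q * cnv q)" using PI by auto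
            have "d \<in> R" using p q RI by (auto simp: mult.assoc intro!: image_eqI[where x="(p,q)"])
            then show "d \<le> Sup_fin R" using finR by (rule Sup_fin.coboundedI[rotated])
          qed
          then show ?thesis by (subst Sup_fin.bounded_iff) (use finP neP in auto)
        qed
        finally show "c \<le> Sup_fin R" .
      qed
      then show ?thesis by (subst Sup_fin.bounded_iff) (use finP neP in auto)
    qed
    finally show "x \<le> Sup_fin R" .
  next
    have "\<forall>d\<in>R. d \<le> x"
    proof
      fix d assume "d \<in> R"
      then obtain p q where pq: "p \<in> IP" "q \<in> IP" "d = (p * cnv p) * x * (q * cnv q)"
        using RI by (auto simp: mult.assoc)
      have "p * cnv p \<le> 1" "q * cnv q \<le> 1"
        using pq ipp IP_def point_def injective_def by auto
      then have "(p * cnv p) * x * (q * cnv q) \<le> 1 * x * 1"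
        by (meson mult_mono_l mult_mono_r order_trans)
      then show "d \<le> x" using pq by simp
    qed
    then show "Sup_fin R \<le> x" using Sup_fin.bounded_iff[OF finR neR] by blast
  qed
  have P3: "\<forall>a::'a. atom a \<longrightarrow> (\<exists>p. ideal_point p \<and> a \<le> p)"
  proof (intro allI impI)
    fix a :: 'a assume at: "atom a"
    then have "a \<noteq> bot" by (simp add: atom_def)
    then obtain p where p: "p \<in> IP" "inf a p \<noteq> bot" using nonbot by blast
    then have "inf a p = a" using at unfolding atom_def by auto
    then show "\<exists>p. ideal_point p \<and> a \<le> p" using p IP_def inf.absorb_iff1 by auto
  qed
  have P4: "\<forall>p::'a. point p \<longrightarrow> ideal_point p"
  proof (intro allI impI)
    fix q :: 'a assume q: "point q"
    show "ideal_point q"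
    proof (cases "q = bot")
      case True
      then have "(1::'a) \<le> bot" using q point_def surjective_def mult_bot_right by metis
      then have "\<forall>y::'a. y = bot" by (metis bot_unique mult_1_right mult_bot_right)
      then show ?thesis using q ideal_point_def by blast
    next
      case False
      then obtain p where p: "p \<in> IP" "inf q p \<noteq> bot" using nonbot by blast
      have "q \<le> p" using lemA p q IP_def by auto
      then have "p \<le> q" using lemB[OF ipp q] p IP_def by blast
      then have "q = p" using \<open>q \<le> p\<close> by simp
      then show ?thesis using p IP_def by simp
    qed
  qed
  show ?thesis using P1 P2 P3 P4 unfolding P_def R_def by (intro conjI)
qed

end
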